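(* For every $n\ge1$ and all polynomials $f_1,g_1,f_2,g_2$ of degree at most $n$, there exist real polynomials $\alpha,\beta,\gamma,\delta$ in $h$ with $\deg\alpha,\deg\gamma\le[\frac n2]$, $\deg\beta,\deg\delta\le[\frac{n-1}{2}]$, and a real polynomial $\varphi$ of degree at most $n-1$, such that for all $h\in(0,+\infty)$, $$M(h)=\alpha(h)U_{0,0}(h)+\beta(h)U_{0,1}(h)+\gamma(h)V_{0,0}(h)+\delta(h)V_{0,1}(h)+\Big(\tfrac{\sqrt{1+4h}-1}{2}\Big)^{3/2}\varphi\Big(\tfrac{\sqrt{1+4h}-1}{2}\Big).$$
   Context: Consider the system with the single switching curve $y=x^2$: $\dot x=y+\varepsilon f_1(x,y)$, $\dot y=-x+\varepsilon g_1(x,y)$ for $y<x^2$, and $\dot x=y+\varepsilon f_2(x,y)$, $\dot y=-x+\varepsilon g_2(x,y)$ for $y>x^2$, where $f_1,g_1,f_2,g_2$ are real polynomials of degree at most $n$. For $h>0$ let $u=\sqrt{(\sqrt{1+4h}-1)/2}$, $\Gamma_h$ the circle $x^2+y^2=h$, $A=(u,u^2)$, $D=(-u,u^2)$. Let $\widehat{AD}$ be the arc of $\Gamma_h$ traversed clockwise from $A$ to $D$ through $(\sqrt h,0),(0,-\sqrt h),(-\sqrt h,0)$, and $\widehat{DA}$ the arc traversed clockwise from $D$ to $A$ through $(0,\sqrt h)$. The first order Melnikov function is $M(h)=\int_{\widehat{AD}}g_1dx-f_1dy+\int_{\widehat{DA}}g_2dx-f_2dy$, and for integers $i,j\ge0$,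 $U_{i,j}(h)=\int_{\widehat{AD}}x^iy^jdx$, $V_{i,j}(h)=\int_{\widehat{DA}}x^iy^jdx$. $[p]$ is the integer part of $p$. *)

theory Defs
  imports "HOL-Analysis.Analysis" "HOL-Computational_Algebra.Polynomial"
begin

definition poly2_deg_le :: "nat \<Rightarrow> (real \<Rightarrow> real \<Rightarrow> real) \<Rightarrow> bool" where
  "poly2_deg_le n F \<longleftrightarrow>
     (\<exists>c :: nat \<Rightarrow> nat \<Rightarrow> real. \<forall>x y. F x y = (\<Sum>i\<le>n. \<Sum>j\<le>n - i. c i j * x ^ i * y ^ j))"

definition vv :: "real \<Rightarrow> real" where
  "vv h = (sqrt (1 + 4 * h) - 1) / 2"

definition uu :: "real \<Rightarrow> real" where
  "uu h = sqrt (vv h)"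

definition arc_int :: "(real \<Rightarrow> real \<Rightarrow> real) \<Rightarrow> (real \<Rightarrow> real \<Rightarrow> real) \<Rightarrow> real \<Rightarrow> real \<Rightarrow> real \<Rightarrow> real" where
  "arc_int P Q h th0 th1 = integral {0..1} (\<lambda>t.
     let th = th0 + t * (th1 - th0); x = sqrt h * cos th; y = sqrt h * sin th in
     (P x y * (- sqrt h * sin th) + Q x y * (sqrt h * cos th)) * (th1 - th0))"

text \<open>A = (u,u^2) has polar angle arctan u; D = (-u,u^2) has angle pi - arctan u.
  Arc AD (clockwise through (sqrt h,0),(0,-sqrt h),(-sqrt h,0)): angle from arctan u down to -pi - arctan u.
  Arc DA (clockwise through (0,sqrt h)): angle from pi - arctan u down to arctan u.\<close>
definition arcAD :: "(real \<Rightarrow> real \<Rightarrow> real) \<Rightarrow> (real \<Rightarrow> real \<Rightarrow> real) \<Rightarrow> real \<Rightarrow> real" where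
  "arcAD P Q h = arc_int P Q h (arctan (uu h)) (- pi - arctan (uu h))"

definition arcDA :: "(real \<Rightarrow> real \<Rightarrow> real) \<Rightarrow> (real \<Rightarrow> real \<Rightarrow> real) \<Rightarrow> real \<Rightarrow> real" where
  "arcDA P Q h = arc_int P Q h (pi - arctan (uu h)) (arctan (uu h))"

definition melnikov :: "(real \<Rightarrow> real \<Rightarrow> real) \<Rightarrow> (real \<Rightarrow> real \<Rightarrow> real) \<Rightarrow>
    (real \<Rightarrow> real \<Rightarrow> real) \<Rightarrow> (real \<Rightarrow> real \<Rightarrow> real) \<Rightarrow> real \<Rightarrow> real" where
  "melnikov f1 g1 f2 g2 h =
     arcAD g1 (\<lambda>x y. - f1 x y) h + arcDA g2 (\<lambda>x y. - f2 x y) h"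

definition U :: "nat \<Rightarrow> nat \<Rightarrow> real \<Rightarrow> real" where
  "U i j h = arcAD (\<lambda>x y. x ^ i * y ^ j) (\<lambda>x y. 0) h"

definition V :: "nat \<Rightarrow> nat \<Rightarrow> real \<Rightarrow> real" where
  "V i j h = arcDA (\<lambda>x y. x ^ i * y ^ j) (\<lambda>x y. 0) h"

end

theory Submission
  imports Defs
begin


definition Xc :: "real \<Rightarrow> real \<Rightarrow> real \<Rightarrow> real \<Rightarrow> real" where
  "Xc h a b t = sqrt h * cos (a + t * (b - a))"
definition Yc :: "real \<Rightarrow> real \<Rightarrow> real \<Rightarrow> real \<Rightarrow> real" where
  "Yc h a b t = sqrt h * sin (a + t * (b - a))"

definition JJ :: "nat \<Rightarrow> nat \<Rightarrow> real \<Rightarrow> real \<Rightarrow> real \<Rightarrow> real" where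
  "JJ i j h a b = integral {0..1} (\<lambda>t. - (Xc h a b t ^ i * Yc h a b t ^ (j+1)) * (b - a))"
definition KK :: "nat \<Rightarrow> nat \<Rightarrow> real \<Rightarrow> real \<Rightarrow> real \<Rightarrow> real" where
  "KK i j h a b = integral {0..1} (\<lambda>t. (Xc h a b t ^ (i+1) * Yc h a b t ^ j) * (b - a))"

lemma cont_XY [continuous_intros]:
  "continuous_on S (Xc h a b)" "continuous_on S (Yc h a b)"
  unfolding Xc_def Yc_def by (intro continuous_intros)+

lemma XY_circle: "h \<ge> 0 \<Longrightarrow> Xc h a b t ^ 2 + Yc h a b t ^ 2 = h"
  unfolding Xc_def Yc_def by (simp add: power_mult_distrib flip: distrib_left)

lemma int01: "continuous_on {0..1} f \<Longrightarrow> (f::real\<Rightarrow>real) integrable_on {0..1}"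
  by (rule integrable_continuous_interval)

lemma exact:
  "integral {0..1} (\<lambda>t. (real q * Xc h a b t^(p+1) * Yc h a b t^(q-1)
        - real p * Xc h a b t^(p-1) * Yc h a b t^(q+1)) * (b-a))
   = Xc h a b 1^p * Yc h a b 1^q - Xc h a b 0^p * Yc h a b 0^q"
proof -
  let ?X = "Xc h a b" and ?Y = "Yc h a b"
  have dX: "(?X has_real_derivative (- ?Y t * (b-a))) (at t)" for t
    unfolding Xc_def Yc_def by (auto intro!: derivative_eq_intros)
  have dY: "(?Y has_real_derivative (?X t * (b-a))) (at t)" for t
    unfolding Xc_def Yc_def by (auto intro!: derivative_eq_intros)
  have d: "((\<lambda>t. ?X t^p * ?Y t^q) has_real_derivative
      (real q * ?X t^(p+1) * ?Y t^(q-1) - real p * ?X t^(p-1) * ?Y t^(q+1)) * (b-a)) (at t)" for t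
  proof -
    have "((\<lambda>t. ?X t^p * ?Y t^q) has_real_derivative
      (real p * ?X t^(p-1) * (- ?Y t * (b-a))) * ?Y t^q + ?X t^p * (real q * ?Y t^(q-1) * (?X t * (b-a)))) (at t)"
      apply (rule derivative_eq_intros dX dY refl)+
      apply (simp add: algebra_simps)
      done
    moreover have "(real p * ?X t^(p-1) * (- ?Y t * (b-a))) * ?Y t^q + ?X t^p * (real q * ?Y t^(q-1) * (?X t * (b-a)))
       = (real q * ?X t^(p+1) * ?Y t^(q-1) - real p * ?X t^(p-1) * ?Y t^(q+1)) * (b-a)"
      by (simp add: algebra_simps)
    ultimately show ?thesis by simp
  qed
  have "((\<lambda>t. (real q * ?X t^(p+1) * ?Y t^(q-1) - real p * ?X t^(p-1) * ?Y t^(q+1)) * (b-a))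
        has_integral (?X 1^p * ?Y 1^q - ?X 0^p * ?Y 0^q)) {0..1}"
    apply (rule fundamental_theorem_of_calculus)
     apply simp
    apply (rule has_vector_derivative_at_within)
    using d unfolding has_real_derivative_iff_has_vector_derivative by blast
  then show ?thesis by (rule integral_unique)
qed

lemma X2: "h \<ge> 0 \<Longrightarrow> Xc h a b t ^ 2 = h - Yc h a b t ^ 2"
  using XY_circle[of h a b t] by simp

lemma R3: assumes "h \<ge> 0"
  shows "JJ (i+2) j h a b = h * JJ i j h a b - JJ i (j+2) h a b"
proof -
  let ?X = "Xc h a b" and ?Y = "Yc h a b"
  have "JJ (i+2) j h a b = integral {0..1} (\<lambda>t. h * (- (?X t^i * ?Y t^(j+1)) * (b-a))
          - (- (?X t^i * ?Y t^(j+2+1)) * (b-a)))"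
    unfolding JJ_def
  proof (rule integral_cong)
    fix t
    have hh: "h = ?X t^2 + ?Y t^2" using XY_circle[OF assms] by simp
    have P: "\<And>x y hh::real. hh = x^2+y^2 \<Longrightarrow> - (x ^ (i + 2) * y ^ (j + 1)) * (b - a) = hh * (- (x^i * y^(j+1)) * (b-a))
          - (- (x^i * y^(j+2+1)) * (b-a))"
      by (simp add: power_add power2_eq_square algebra_simps)
    show "- (?X t ^ (i + 2) * ?Y t ^ (j + 1)) * (b - a) = h * (- (?X t^i * ?Y t^(j+1)) * (b-a))
          - (- (?X t^i * ?Y t^(j+2+1)) * (b-a))"
      by (rule P[OF hh])
  qed
  also have "\<dots> = h * JJ i j h a b - JJ i (j+2) h a b"
    unfolding JJ_def by (subst integral_diff) (auto intro!: int01 continuous_intros)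
  finally show ?thesis .
qed

lemma R4: assumes "h \<ge> 0"
  shows "real (j+3) * JJ 0 (j+2) h a b - real (j+2) * h * JJ 0 j h a b
     = Xc h a b 1 * Yc h a b 1^(j+2) - Xc h a b 0 * Yc h a b 0^(j+2)"
proof -
  let ?X = "Xc h a b" and ?Y = "Yc h a b"
  have "Xc h a b 1 * Yc h a b 1^(j+2) - Xc h a b 0 * Yc h a b 0^(j+2) =
     integral {0..1} (\<lambda>t. (real (j+2) * ?X t^(1+1) * ?Y t^(j+2-1)
        - real 1 * ?X t^(1-1) * ?Y t^(j+2+1)) * (b-a))"
    using exact[of "j+2" h a b 1] by simp
  also have "\<dots> = integral {0..1} (\<lambda>t. real (j+3) * (- (?X t^0 * ?Y t^(j+2+1)) * (b-a))
          - real (j+2) * h * (- (?X t^0 * ?Y t^(j+1)) * (b-a)))"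
  proof (rule integral_cong)
    fix t
    have hh: "h = ?X t^2 + ?Y t^2" using XY_circle[OF assms] by simp
    have P: "\<And>x y hh::real. hh = x^2+y^2 \<Longrightarrow> (real (j+2) * x^(1+1) * y^(j+2-1)
        - real 1 * x^(1-1) * y^(j+2+1)) * (b-a) = real (j+3) * (- (x^0 * y^(j+2+1)) * (b-a))
          - real (j+2) * hh * (- (x^0 * y^(j+1)) * (b-a))"
      by (simp add: power_add power2_eq_square algebra_simps)
    show "(real (j+2) * ?X t^(1+1) * ?Y t^(j+2-1)
        - real 1 * ?X t^(1-1) * ?Y t^(j+2+1)) * (b-a) = real (j+3) * (- (?X t^0 * ?Y t^(j+2+1)) * (b-a))
          - real (j+2) * h * (- (?X t^0 * ?Y t^(j+1)) * (b-a))"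
      by (rule P[OF hh])
  qed
  also have "\<dots> = real (j+3) * JJ 0 (j+2) h a b - real (j+2) * h * JJ 0 j h a b"
    unfolding JJ_def by (subst integral_diff) (auto intro!: int01 continuous_intros)
  finally show ?thesis by simp
qed

lemma R2: "real (j+2) * JJ 1 j h a b = - (Yc h a b 1^(j+2) - Yc h a b 0^(j+2))"
proof -
  let ?X = "Xc h a b" and ?Y = "Yc h a b"
  have "Yc h a b 1^(j+2) - Yc h a b 0^(j+2) =
     integral {0..1} (\<lambda>t. (real (j+2) * ?X t^(0+1) * ?Y t^(j+2-1)
        - real 0 * ?X t^(0-1) * ?Y t^(j+2+1)) * (b-a))"
    using exact[of "j+2" h a b 0] by simp
  also have "\<dots> = integral {0..1} (\<lambda>t. - real (j+2) * (- (?X t^1 * ?Y t^(j+1)) * (b-a)))"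
    by (rule integral_cong) (simp add: algebra_simps)
  also have "\<dots> = - (real (j+2) * JJ 1 j h a b)"
    unfolding JJ_def by simp (simp add: algebra_simps)
  finally show ?thesis by simp
qed

lemma R1: "JJ 0 0 h a b = Xc h a b 1 - Xc h a b 0"
proof -
  let ?X = "Xc h a b" and ?Y = "Yc h a b"
  have "Xc h a b 1 - Xc h a b 0 =
     integral {0..1} (\<lambda>t. (real 0 * ?X t^(1+1) * ?Y t^(0-1)
        - real 1 * ?X t^(1-1) * ?Y t^(0+1)) * (b-a))"
    using exact[of 0 h a b 1] by simp
  also have "\<dots> = JJ 0 0 h a b"
    unfolding JJ_def by (rule integral_cong) simp
  finally show ?thesis by simp
qed

lemma R6: "KK i 0 h a b + real i * JJ (i-1) 1 h a b
   = Xc h a b 1^i * Yc h a b 1 - Xc h a b 0^i * Yc h a b 0"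
proof -
  let ?X = "Xc h a b" and ?Y = "Yc h a b"
  have "Xc h a b 1^i * Yc h a b 1 - Xc h a b 0^i * Yc h a b 0 =
     integral {0..1} (\<lambda>t. (real 1 * ?X t^(i+1) * ?Y t^(1-1)
        - real i * ?X t^(i-1) * ?Y t^(1+1)) * (b-a))"
    using exact[of 1 h a b i] by simp
  also have "\<dots> = integral {0..1} (\<lambda>t. (?X t^(i+1) * ?Y t^0) * (b-a)
        + real i * (- (?X t^(i-1) * ?Y t^(1+1)) * (b-a)))"
    by (rule integral_cong) (simp add: algebra_simps)
  also have "\<dots> = KK i 0 h a b + real i * JJ (i-1) 1 h a b"
    unfolding JJ_def KK_def by (subst integral_add) (auto intro!: int01 continuous_intros)
  finally show ?thesis by simp
qed

lemma R5: "KK i (j+1) h a b = - JJ (i+1) j h a b"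
  unfolding JJ_def KK_def
  by (simp flip: integral_neg)

lemma vv_pos: "h > 0 \<Longrightarrow> vv h > 0"
  unfolding vv_def by (simp add: real_less_rsqrt)

lemma h_eq: "h > 0 \<Longrightarrow> h = vv h + vv h ^ 2"
proof -
  assume "h > 0"
  have s: "sqrt (1 + 4*h) ^ 2 = 1 + 4*h" using \<open>h>0\<close> by simp
  show ?thesis unfolding vv_def using s by (simp add: power2_eq_square field_simps) 
qed

lemma uu_sq: "h > 0 \<Longrightarrow> uu h ^ 2 = vv h"
  unfolding uu_def using vv_pos[of h] by simp

lemma uu_pos: "h > 0 \<Longrightarrow> uu h > 0"
  unfolding uu_def using vv_pos[of h] by simp

lemma vv_powr: "h > 0 \<Longrightarrow> vv h powr (3/2) = uu h ^ 3"
proof -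
  assume h: "h > 0"
  have "vv h * sqrt (vv h) = vv h powr 1 * vv h powr (1/2)" using vv_pos[OF h]
    by (simp add: powr_half_sqrt)
  also have "\<dots> = vv h powr (1 + 1/2)" by (rule powr_add[symmetric])
  finally have 1: "vv h powr (3/2) = vv h * sqrt (vv h)" by simp
  have "vv h * sqrt (vv h) = uu h ^ 3" using uu_sq[OF h] unfolding uu_def
    by (simp add: power3_eq_cube)
  with 1 show ?thesis by simp
qed

lemma sqrt_h: "h > 0 \<Longrightarrow> sqrt h = uu h * sqrt (1 + uu h ^ 2)"
proof -
  assume h: "h > 0"
  have "h = uu h ^ 2 * (1 + uu h ^ 2)" using h_eq[OF h] uu_sq[OF h]
    by (simp add: algebra_simps power2_eq_square)
  then have "sqrt h = sqrt (uu h ^ 2) * sqrt (1 + uu h ^ 2)"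
    by (metis real_sqrt_mult)
  then show ?thesis using uu_pos[OF h] by simp
qed

lemma AD_ends:
  assumes h: "h > 0"
  shows "Xc h (arctan (uu h)) (- pi - arctan (uu h)) 0 = uu h"
    "Xc h (arctan (uu h)) (- pi - arctan (uu h)) 1 = - uu h"
    "Yc h (arctan (uu h)) (- pi - arctan (uu h)) 0 = uu h ^ 2"
    "Yc h (arctan (uu h)) (- pi - arctan (uu h)) 1 = uu h ^ 2"
  using sqrt_h[OF h] uu_pos[OF h] add_pos_nonneg[of 1 "uu h * uu h"]
  by (simp_all add: Xc_def Yc_def cos_arctan sin_arctan power2_eq_square)

lemma DA_ends:
  assumes h: "h > 0"
  shows "Xc h (pi - arctan (uu h)) (arctan (uu h)) 0 = - uu h"
    "Xc h (pi - arctan (uu h)) (arctan (uu h)) 1 = uu h"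
    "Yc h (pi - arctan (uu h)) (arctan (uu h)) 0 = uu h ^ 2"
    "Yc h (pi - arctan (uu h)) (arctan (uu h)) 1 = uu h ^ 2"
  using sqrt_h[OF h] uu_pos[OF h] add_pos_nonneg[of 1 "uu h * uu h"]
  by (simp_all add: Xc_def Yc_def cos_arctan sin_arctan power2_eq_square)

lemma U_JJ: "U 0 j h = JJ 0 j h (arctan (uu h)) (- pi - arctan (uu h))"
  unfolding U_def arcAD_def arc_int_def JJ_def Xc_def Yc_def
  by (rule integral_cong) (simp add: Let_def algebra_simps)

lemma V_JJ: "V 0 j h = JJ 0 j h (pi - arctan (uu h)) (arctan (uu h))"
  unfolding V_def arcDA_def arc_int_def JJ_def Xc_def Yc_def
  by (rule integral_cong) (simp add: Let_def algebra_simps)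

lemma U00: "h > 0 \<Longrightarrow> U 0 0 h = - 2 * uu h"
  using AD_ends[of h] by (simp add: U_JJ R1)

definition Rep :: "nat \<Rightarrow> (real \<Rightarrow> real) \<Rightarrow> bool" where
  "Rep m F \<longleftrightarrow> (\<exists>\<alpha> \<beta> \<gamma> \<delta> \<phi> :: real poly.
     degree \<alpha> \<le> m div 2 \<and> degree \<gamma> \<le> m div 2 \<and>
     degree \<beta> \<le> (m - 1) div 2 \<and> degree \<delta> \<le> (m - 1) div 2 \<and>
     degree \<phi> \<le> m - 1 \<and>
     (\<forall>h::real. h > 0 \<longrightarrow>
        F h =
          poly \<alpha> h * U 0 0 h + poly \<beta> h * U 0 1 h
        + poly \<gamma> h * V 0 0 h + poly \<delta> h * V 0 1 h
        + vv h powr (3/2) * poly \<phi> (vv h)))"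

lemma Rep_zero: "Rep m (\<lambda>h. 0)"
  unfolding Rep_def by (rule exI[of _ 0])+ simp

lemma Rep_cong: "Rep m F \<Longrightarrow> (\<And>h. h > 0 \<Longrightarrow> G h = F h) \<Longrightarrow> Rep m G"
  unfolding Rep_def by metis

lemma Rep_add: assumes "Rep m F" "Rep m G" shows "Rep m (\<lambda>h. F h + G h)"
proof -
  obtain a1 b1 c1 d1 p1 where 1: "degree a1 \<le> m div 2" "degree c1 \<le> m div 2"
     "degree b1 \<le> (m - 1) div 2" "degree d1 \<le> (m - 1) div 2" "degree p1 \<le> m - 1"
     "\<forall>h::real. h > 0 \<longrightarrow> F h = poly a1 h * U 0 0 h + poly b1 h * U 0 1 h
        + poly c1 h * V 0 0 h + poly d1 h * V 0 1 h + vv h powr (3/2) * poly p1 (vv h)"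
    using assms(1) unfolding Rep_def by blast
  obtain a2 b2 c2 d2 p2 where 2: "degree a2 \<le> m div 2" "degree c2 \<le> m div 2"
     "degree b2 \<le> (m - 1) div 2" "degree d2 \<le> (m - 1) div 2" "degree p2 \<le> m - 1"
     "\<forall>h::real. h > 0 \<longrightarrow> G h = poly a2 h * U 0 0 h + poly b2 h * U 0 1 h
        + poly c2 h * V 0 0 h + poly d2 h * V 0 1 h + vv h powr (3/2) * poly p2 (vv h)"
    using assms(2) unfolding Rep_def by blast
  show ?thesis unfolding Rep_def
    apply (rule exI[of _ "a1+a2"], rule exI[of _ "b1+b2"], rule exI[of _ "c1+c2"],
           rule exI[of _ "d1+d2"], rule exI[of _ "p1+p2"])
    using 1 2 by (auto intro!: degree_add_le simp: algebra_simps)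
qed

lemma Rep_scale: assumes "Rep m F" shows "Rep m (\<lambda>h. c * F h)"
proof -
  obtain a1 b1 c1 d1 p1 where 1: "degree a1 \<le> m div 2" "degree c1 \<le> m div 2"
     "degree b1 \<le> (m - 1) div 2" "degree d1 \<le> (m - 1) div 2" "degree p1 \<le> m - 1"
     "\<forall>h::real. h > 0 \<longrightarrow> F h = poly a1 h * U 0 0 h + poly b1 h * U 0 1 h
        + poly c1 h * V 0 0 h + poly d1 h * V 0 1 h + vv h powr (3/2) * poly p1 (vv h)"
    using assms(1) unfolding Rep_def by blast
  show ?thesis unfolding Rep_def
    apply (rule exI[of _ "smult c a1"], rule exI[of _ "smult c b1"], rule exI[of _ "smult c c1"],
           rule exI[of _ "smult c d1"], rule exI[of _ "smult c p1"])
    using 1 by (auto intro: order_trans[OF degree_smult_le] simp: algebra_simps)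
qed

lemma Rep_mono: assumes "Rep m F" "m \<le> m'" shows "Rep m' F"
proof -
  have a: "m div 2 \<le> m' div 2" "(m - 1) div 2 \<le> (m' - 1) div 2" "m - 1 \<le> m' - 1"
    using assms(2) by (auto intro: div_le_mono)
  show ?thesis using assms(1) a unfolding Rep_def by (meson order_trans)
qed

lemma Rep_sum: "finite S \<Longrightarrow> (\<And>i. i \<in> S \<Longrightarrow> Rep m (F i)) \<Longrightarrow> Rep m (\<lambda>h. \<Sum>i\<in>S. F i h)"
proof (induction S rule: finite_induct)
  case empty then show ?case by (simp add: Rep_zero)
next
  case (insert x S) then show ?case by (simp add: Rep_add)
qed

lemma Rep_h: assumes "Rep m F" "1 \<le> m" shows "Rep (m+2) (\<lambda>h. h * F h)"
proof -
  obtain a1 b1 c1 d1 p1 where 1: "degree a1 \<le> m div 2" "degree c1 \<le> m div 2"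
     "degree b1 \<le> (m - 1) div 2" "degree d1 \<le> (m - 1) div 2" "degree p1 \<le> m - 1"
     "\<forall>h::real. h > 0 \<longrightarrow> F h = poly a1 h * U 0 0 h + poly b1 h * U 0 1 h
        + poly c1 h * V 0 0 h + poly d1 h * V 0 1 h + vv h powr (3/2) * poly p1 (vv h)"
    using assms(1) unfolding Rep_def by blast
  have dp: "degree (pCons 0 p) \<le> degree p + 1" for p :: "real poly"
    by (cases "p = 0") auto
  have dq: "degree ([:0,1,1:] * p1) \<le> 2 + degree p1"
    using degree_mult_le[of "[:0,1,1:]" p1] by simp
  show ?thesis unfolding Rep_def
    apply (rule exI[of _ "pCons 0 a1"], rule exI[of _ "pCons 0 b1"], rule exI[of _ "pCons 0 c1"],
           rule exI[of _ "pCons 0 d1"], rule exI[of _ "[:0,1,1:] * p1"])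
    apply (intro conjI)
    using 1 dp[of a1] dp[of b1] dp[of c1] dp[of d1] dq assms(2) apply linarith+
    apply clarify
    subgoal for h
    proof -
      assume h: "0 < h"
      have e: "h * (vv h powr (3/2) * poly p1 (vv h)) = vv h powr (3/2) * poly ([:0,1,1:] * p1) (vv h)"
        by (subst (1) h_eq[OF h]) (simp add: algebra_simps power2_eq_square)
      show ?thesis using 1(6) h e by (simp add: algebra_simps)
    qed
    done
qed

lemma Rep_upow: assumes "k \<le> m" shows "Rep m (\<lambda>h. c * uu h ^ (2*k+1))"
proof (cases "k = 0")
  case True
  show ?thesis unfolding Rep_def
    apply (rule exI[of _ "[:-c/2:]"], rule exI[of _ 0], rule exI[of _ 0],
           rule exI[of _ 0], rule exI[of _ 0])
    using True by (simp add: U00)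
next
  case False
  have eq: "c*uu h^(2*k+1) = vv h powr (3/2) * poly (monom c (k-1)) (vv h)" if h: "h > 0" for h
  proof -
    have A: "vv h ^ (k - 1) = uu h^(2*(k - 1))" by (simp add: uu_sq[OF h, symmetric] power_mult)
    have B: "uu h ^ (2 * k + 1) = uu h^3 * uu h^(2*(k - 1))"
    proof -
      have "2*k+1 = 3 + 2*(k-1)" using False by simp
      then show ?thesis by (simp only: power_add)
    qed
    show ?thesis unfolding vv_powr[OF h] poly_monom A B by simp
  qed
  show ?thesis unfolding Rep_def
    apply (rule exI[of _ 0], rule exI[of _ 0], rule exI[of _ 0],
           rule exI[of _ 0], rule exI[of _ "monom c (k-1)"])
    using False assms eq by (auto intro: order_trans[OF degree_monom_le])

qed




lemma Rep_E: assumes "even a \<or> a div 2 + b \<le> m"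
  shows "Rep m (\<lambda>h. c * ((-(s*uu h))^a * (uu h^2)^b - (s*uu h)^a * (uu h^2)^b))"
proof (cases "even a")
  case True
  then show ?thesis by (intro Rep_cong[OF Rep_zero]) simp
next
  case False
  then have k: "a div 2 + b \<le> m" using assms by simp
  have ea: "a = 2 * (a div 2) + 1" using False by presburger
  show ?thesis
  proof (rule Rep_cong[OF Rep_upow[OF k, of "-2*c* s ^ a"]])
    fix h :: real
    have "(uu h^2)^b = uu h^(2*b)" by (simp add: power_mult)
    moreover have "uu h ^ (2 * (a div 2 + b) + 1) = uu h ^ a * uu h^(2*b)"
      by (subst (2) ea) (simp add: power_add algebra_simps)
    ultimately show "c * ((-(s*uu h))^a * (uu h^2)^b - (s*uu h)^a * (uu h^2)^b)
      = -2*c* s ^ a * uu h ^ (2 * (a div 2 + b) + 1)"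
      using False by (simp add: power_mult_distrib algebra_simps)
  qed
qed

locale arcs =
  fixes A B :: "real \<Rightarrow> real" and s :: real
  assumes Xs: "\<And>h. h > 0 \<Longrightarrow> Xc h (A h) (B h) 0 = s * uu h"
    and Xe: "\<And>h. h > 0 \<Longrightarrow> Xc h (A h) (B h) 1 = -(s * uu h)"
    and Ys: "\<And>h. h > 0 \<Longrightarrow> Yc h (A h) (B h) 0 = uu h ^ 2"
    and Ye: "\<And>h. h > 0 \<Longrightarrow> Yc h (A h) (B h) 1 = uu h ^ 2"
    and J01: "Rep 1 (\<lambda>h. JJ 0 1 h (A h) (B h))"
begin

lemma J00: "Rep 0 (\<lambda>h. JJ 0 0 h (A h) (B h))"
  by (rule Rep_cong[OF Rep_E[of 1 0 0 1 s]]) (simp_all add: R1 Xs Xe)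

lemma hJ00: "Rep 2 (\<lambda>h. h * JJ 0 0 h (A h) (B h))"
proof (rule Rep_cong[OF Rep_add[OF Rep_upow[of 1 2 "-2* s"] Rep_upow[of 2 2 "-2* s"]]])
  fix h :: real assume h: "h > 0"
  have hu: "h = uu h^2 + uu h^4" using h_eq[OF h] uu_sq[OF h]
    by (metis power2_eq_square power4_eq_xxxx mult.assoc)
  have "JJ 0 0 h (A h) (B h) = -2 * s * uu h" by (simp add: R1 Xs Xe h)
  then have "h * JJ 0 0 h (A h) (B h) = (uu h^2 + uu h^4) * (-2 * s * uu h)"
    using arg_cong[OF hu, of "\<lambda>z. z * JJ 0 0 h (A h) (B h)"] by simp
  moreover have "(uu h^2 + uu h^4) * (-2 * s * uu h) = -2 * s * uu h^(2*1+1) + -2 * s * uu h^(2*2+1)"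
    by (simp add: algebra_simps power2_eq_square power3_eq_cube power4_eq_xxxx numeral_eq_Suc)
  ultimately show "h * JJ 0 0 h (A h) (B h) = -2 * s * uu h^(2*1+1) + -2 * s * uu h^(2*2+1)"
    by simp
qed simp_all

lemma J0: "Rep j (\<lambda>h. JJ 0 j h (A h) (B h))"
proof (induction j rule: less_induct)
  case (less j)
  show ?case
  proof (cases "j \<le> 1")
    case True
    then show ?thesis using J00 J01 by (cases j) (auto intro: Rep_mono)
  next
    case False
    define i where "i = j - 2"
    have j: "j = i + 2" using False unfolding i_def by simp
    have hJ: "Rep (i+2) (\<lambda>h. h * JJ 0 i h (A h) (B h))"
    proof (cases "i = 0")
      case True then show ?thesis using hJ00 by (simp only: True add_0)
    next
      case False then show ?thesis using Rep_h[OF less[of i]] j by simp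
    qed
    have E: "Rep (i+2) (\<lambda>h. 1 * ((-(s*uu h))^1 * (uu h^2)^(i+2) - (s*uu h)^1 * (uu h^2)^(i+2)))"
      by (rule Rep_E) simp
    have "Rep (i+2) (\<lambda>h. (1 / real (i+3)) * (real (i+2) * (h * JJ 0 i h (A h) (B h))
          + 1 * ((-(s*uu h))^1 * (uu h^2)^(i+2) - (s*uu h)^1 * (uu h^2)^(i+2))))"
      by (intro Rep_scale Rep_add hJ E)
    then show ?thesis unfolding j
    proof (rule Rep_cong)
      fix h :: real assume h: "h > 0"
      define J2 where "J2 = JJ 0 (i+2) h (A h) (B h)"
      define J0 where "J0 = JJ 0 i h (A h) (B h)"
      define E where "E = (-(s*uu h))^1 * (uu h^2)^(i+2) - (s*uu h)^1 * (uu h^2)^(i+2)"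
      have eq: "real (i+3) * J2 - real (i+2) * h * J0 = E"
        unfolding J2_def J0_def E_def using R4[of h i "A h" "B h"] h by (simp add: Xs Xe Ys Ye)
      have "J2 = (1 / real (i+3)) * (real (i+3) * J2)" by simp
      also have "real (i+3) * J2 = real (i+2) * (h * J0) + 1 * E" using eq by (simp add: algebra_simps)
      finally show "JJ 0 (i + 2) h (A h) (B h) = (1 / real (i+3)) * (real (i+2) * (h * JJ 0 i h (A h) (B h))
          + 1 * ((-(s*uu h))^1 * (uu h^2)^(i+2) - (s*uu h)^1 * (uu h^2)^(i+2)))"
        unfolding J2_def J0_def E_def .
    qed
  qed
qed

lemma JJall: "Rep (i+j) (\<lambda>h. JJ i j h (A h) (B h))"
proof (induction i arbitrary: j rule: less_induct)
  case (less i)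
  consider "i = 0" | "i = 1" | k where "i = k + 2"
  proof -
    assume a: "i = 0 \<Longrightarrow> thesis" "i = 1 \<Longrightarrow> thesis" "\<And>k. i = k + 2 \<Longrightarrow> thesis"
    show thesis
    proof (cases "i \<le> 1")
      case True then show ?thesis using a(1,2) by linarith
    next
      case False then show ?thesis using a(3)[of "i-2"] by simp
    qed
  qed
  then show ?case
  proof cases
    case 1 then show ?thesis using J0 by simp
  next
    case 2
    show ?thesis
    proof (rule Rep_cong[OF Rep_zero])
      fix h :: real assume h: "h > 0"
      have "real (j+2) * JJ 1 j h (A h) (B h) = 0" using R2[of j h "A h" "B h"] h by (simp add: Ys Ye)
      then show "JJ i j h (A h) (B h) = 0" using 2 by simp
    qed
  next
    case 3
    have hJ: "Rep (k+j+2) (\<lambda>h. h * JJ k j h (A h) (B h))"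
    proof (cases "k + j = 0")
      case True then have "k = 0" "j = 0" by auto
      then show ?thesis using hJ00 by (simp only: add_0)
    next
      case False
      have kl: "k < i" using 3 by simp
      have "1 \<le> k + j" using False by linarith
      from Rep_h[OF less(1)[OF kl, of j] this] show ?thesis by simp
    qed
    have IH: "Rep (k+j+2) (\<lambda>h. JJ k (j+2) h (A h) (B h))" using less(1)[of k "j+2"] 3 by (simp add: add.assoc)
    have "Rep (k+j+2) (\<lambda>h. h * JJ k j h (A h) (B h) + (-1) * JJ k (j+2) h (A h) (B h))"
      by (intro Rep_add hJ Rep_scale IH)
    then have "Rep (k+j+2) (\<lambda>h. JJ i j h (A h) (B h))"
    proof (rule Rep_cong)
      fix h :: real assume "h > 0"
      then show "JJ i j h (A h) (B h) = h * JJ k j h (A h) (B h) + (-1) * JJ k (j+2) h (A h) (B h)"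
        unfolding 3 using R3[of h k j "A h" "B h"] by simp
    qed
    moreover have "i + j = k + j + 2" using 3 by simp
    ultimately show ?thesis by simp
  qed
qed

lemma KKall: "Rep (i+j) (\<lambda>h. KK i j h (A h) (B h))"
proof (cases j)
  case (Suc b)
  have "Rep (i+1+b) (\<lambda>h. KK i j h (A h) (B h))"
  proof (rule Rep_cong[OF Rep_scale[OF JJall[of "i+1" b], of "-1"]])
    fix h :: real
    show "KK i j h (A h) (B h) = -1 * JJ (i+1) b h (A h) (B h)" using R5[of i b h "A h" "B h"] Suc by simp
  qed
  then show ?thesis using Suc by simp
next
  case 0
  show ?thesis
  proof (cases i)
    case 0
    show ?thesis
    proof (rule Rep_cong[OF Rep_zero])
      fix h :: real assume h: "h > 0"
      show "KK i j h (A h) (B h) = 0" using R6[of 0 h "A h" "B h"] h 0 \<open>j = 0\<close> by (simp add: Ys Ye)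
    qed
  next
    case (Suc i')
    have E: "Rep i (\<lambda>h. 1 * ((-(s*uu h))^i * (uu h^2)^1 - (s*uu h)^i * (uu h^2)^1))"
      by (rule Rep_E) (use Suc in \<open>auto\<close>)
    have J: "Rep i (\<lambda>h. JJ (i-1) 1 h (A h) (B h))" using JJall[of "i-1" 1] Suc by simp
    have "Rep i (\<lambda>h. 1 * ((-(s*uu h))^i * (uu h^2)^1 - (s*uu h)^i * (uu h^2)^1) + (- real i) * JJ (i-1) 1 h (A h) (B h))"
      by (intro Rep_add E Rep_scale J)
    then show ?thesis
    proof (rule Rep_cong[THEN Rep_mono])
      fix h :: real assume h: "h > 0"
      show "KK i j h (A h) (B h) = 1 * ((-(s*uu h))^i * (uu h^2)^1 - (s*uu h)^i * (uu h^2)^1) + (- real i) * JJ (i-1) 1 h (A h) (B h)"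
      proof -
        define E where "E = (-(s*uu h))^i * (uu h^2)^1 - (s*uu h)^i * (uu h^2)^1"
        have eq: "KK i 0 h (A h) (B h) + real i * JJ (i-1) 1 h (A h) (B h) = E"
          using R6[of i h "A h" "B h"] unfolding Xs[OF h] Xe[OF h] Ys[OF h] Ye[OF h] E_def
          by (simp only: power_one_right)
        show ?thesis unfolding E_def[symmetric] using eq \<open>j = 0\<close> by simp
      qed
    qed (use \<open>j = 0\<close> in simp)
  qed
qed

end


lemma Rep_U01: "Rep 1 (\<lambda>h. JJ 0 1 h (arctan (uu h)) (- pi - arctan (uu h)))"
  unfolding Rep_def
  by (rule exI[of _ 0], rule exI[of _ "[:1:]"], rule exI[of _ 0], rule exI[of _ 0], rule exI[of _ 0])
     (simp add: U_JJ)

lemma Rep_V01: "Rep 1 (\<lambda>h. JJ 0 1 h (pi - arctan (uu h)) (arctan (uu h)))"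
  unfolding Rep_def
  by (rule exI[of _ 0], rule exI[of _ 0], rule exI[of _ 0], rule exI[of _ "[:1:]"], rule exI[of _ 0])
     (simp add: V_JJ)

interpretation AD: arcs "\<lambda>h. arctan (uu h)" "\<lambda>h. - pi - arctan (uu h)" 1
  apply unfold_locales prefer 5 apply (rule Rep_U01) apply (simp_all add: AD_ends) done

interpretation DA: arcs "\<lambda>h. pi - arctan (uu h)" "\<lambda>h. arctan (uu h)" "-1"
  apply unfold_locales prefer 5 apply (rule Rep_V01) apply (simp_all add: DA_ends) done

lemma arc_lin:
  assumes P: "\<And>x y. P x y = (\<Sum>i\<le>n. \<Sum>j\<le>n-i. cp i j * x^i * y^j)"
    and Q: "\<And>x y. Q x y = - (\<Sum>i\<le>n. \<Sum>j\<le>n-i. cq i j * x^i * y^j)"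
  shows "arc_int P Q h a b = (\<Sum>i\<le>n. \<Sum>j\<le>n-i. cp i j * JJ i j h a b - cq i j * KK i j h a b)"
proof -
  have "arc_int P Q h a b = integral {0..1} (\<lambda>t. \<Sum>i\<le>n. \<Sum>j\<le>n-i.
      (cp i j * (- (Xc h a b t^i * Yc h a b t^(j+1)) * (b-a)) - cq i j * ((Xc h a b t^(i+1) * Yc h a b t^j) * (b-a))))"
    unfolding arc_int_def Let_def
  proof (rule integral_cong)
    fix t
    let ?X = "Xc h a b t" and ?Y = "Yc h a b t"
    have "(P ?X ?Y * (- ?Y) + Q ?X ?Y * ?X) * (b - a) = (\<Sum>i\<le>n. \<Sum>j\<le>n-i.
      (cp i j * (- (?X^i * ?Y^(j+1)) * (b-a)) - cq i j * ((?X^(i+1) * ?Y^j) * (b-a))))"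
    proof -
      have 1: "P ?X ?Y * (- ?Y) * (b - a) = (\<Sum>i\<le>n. \<Sum>j\<le>n-i. cp i j * ?X^i * ?Y^j * (- ?Y) * (b-a))"
        unfolding P by (simp add: sum_distrib_right sum_negf)
      have 2: "Q ?X ?Y * ?X * (b - a) = (\<Sum>i\<le>n. \<Sum>j\<le>n-i. - (cq i j * ?X^i * ?Y^j) * ?X * (b-a))"
        unfolding Q by (simp add: sum_distrib_right sum_negf)
      have "(P ?X ?Y * (- ?Y) + Q ?X ?Y * ?X) * (b - a) = P ?X ?Y * (- ?Y) * (b - a) + Q ?X ?Y * ?X * (b - a)"
        by (simp add: algebra_simps)
      also have "\<dots> = (\<Sum>i\<le>n. \<Sum>j\<le>n-i. cp i j * ?X^i * ?Y^j * (- ?Y) * (b-a) + - (cq i j * ?X^i * ?Y^j) * ?X * (b-a))"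
        unfolding 1 2 by (simp only: sum.distrib)
      also have "\<dots> = (\<Sum>i\<le>n. \<Sum>j\<le>n-i.
         (cp i j * (- (?X^i * ?Y^(j+1)) * (b-a)) - cq i j * ((?X^(i+1) * ?Y^j) * (b-a))))"
        by (intro sum.cong refl) (simp add: algebra_simps)
      finally show ?thesis .
    qed
    then show "(P (sqrt h * cos (a + t * (b - a))) (sqrt h * sin (a + t * (b - a))) *
          (- sqrt h * sin (a + t * (b - a))) +
          Q (sqrt h * cos (a + t * (b - a))) (sqrt h * sin (a + t * (b - a))) *
          (sqrt h * cos (a + t * (b - a)))) * (b - a) = (\<Sum>i\<le>n. \<Sum>j\<le>n-i.
      (cp i j * (- (?X^i * ?Y^(j+1)) * (b-a)) - cq i j * ((?X^(i+1) * ?Y^j) * (b-a))))"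
      unfolding Xc_def Yc_def by simp
  qed
  also have "\<dots> = (\<Sum>i\<le>n. \<Sum>j\<le>n-i. cp i j * JJ i j h a b - cq i j * KK i j h a b)"
    unfolding JJ_def KK_def
    apply (subst integral_sum, simp, intro int01 continuous_intros)
    apply (rule sum.cong, rule refl)
    apply (subst integral_sum, simp, intro int01 continuous_intros)
    apply (rule sum.cong, rule refl)
    apply (subst integral_diff, (intro int01 continuous_intros)+)
    apply simp
    done
  finally show ?thesis .
qed


lemma Rep_term:
  assumes "i \<le> n" "j \<le> n - i"
  shows "Rep n (\<lambda>h. c i j * JJ i j h (arctan (uu h)) (- pi - arctan (uu h)) - d i j * KK i j h (arctan (uu h)) (- pi - arctan (uu h)))"
    and "Rep n (\<lambda>h. c i j * JJ i j h (pi - arctan (uu h)) (arctan (uu h)) - d i j * KK i j h (pi - arctan (uu h)) (arctan (uu h)))"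
proof -
  have le: "i + j \<le> n" using assms by simp
  show "Rep n (\<lambda>h. c i j * JJ i j h (arctan (uu h)) (- pi - arctan (uu h)) - d i j * KK i j h (arctan (uu h)) (- pi - arctan (uu h)))"
    by (rule Rep_cong[OF Rep_mono[OF Rep_add[OF Rep_scale[OF AD.JJall[of i j], where c="c i j"] Rep_scale[OF AD.KKall[of i j], where c="- d i j"]] le]]) simp
  show "Rep n (\<lambda>h. c i j * JJ i j h (pi - arctan (uu h)) (arctan (uu h)) - d i j * KK i j h (pi - arctan (uu h)) (arctan (uu h)))"
    by (rule Rep_cong[OF Rep_mono[OF Rep_add[OF Rep_scale[OF DA.JJall[of i j], where c="c i j"] Rep_scale[OF DA.KKall[of i j], where c="- d i j"]] le]]) simp
qed

theorem lemma4p1: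
  fixes n :: nat and f1 g1 f2 g2 :: "real \<Rightarrow> real \<Rightarrow> real"
  assumes "n \<ge> 1"
    and "poly2_deg_le n f1" and "poly2_deg_le n g1"
    and "poly2_deg_le n f2" and "poly2_deg_le n g2"
  shows "\<exists>\<alpha> \<beta> \<gamma> \<delta> \<phi> :: real poly.
     degree \<alpha> \<le> n div 2 \<and> degree \<gamma> \<le> n div 2 \<and>
     degree \<beta> \<le> (n - 1) div 2 \<and> degree \<delta> \<le> (n - 1) div 2 \<and>
     degree \<phi> \<le> n - 1 \<and>
     (\<forall>h::real. h > 0 \<longrightarrow>
        melnikov f1 g1 f2 g2 h =
          poly \<alpha> h * U 0 0 h + poly \<beta> h * U 0 1 h
        + poly \<gamma> h * V 0 0 h + poly \<delta> h * V 0 1 h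
        + vv h powr (3/2) * poly \<phi> (vv h))"
proof -
  obtain cf1 where cf1: "\<And>x y. f1 x y = (\<Sum>i\<le>n. \<Sum>j\<le>n - i. cf1 i j * x ^ i * y ^ j)"
    using assms(2) unfolding poly2_deg_le_def by blast
  obtain cg1 where cg1: "\<And>x y. g1 x y = (\<Sum>i\<le>n. \<Sum>j\<le>n - i. cg1 i j * x ^ i * y ^ j)"
    using assms(3) unfolding poly2_deg_le_def by blast
  obtain cf2 where cf2: "\<And>x y. f2 x y = (\<Sum>i\<le>n. \<Sum>j\<le>n - i. cf2 i j * x ^ i * y ^ j)"
    using assms(4) unfolding poly2_deg_le_def by blast
  obtain cg2 where cg2: "\<And>x y. g2 x y = (\<Sum>i\<le>n. \<Sum>j\<le>n - i. cg2 i j * x ^ i * y ^ j)"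
    using assms(5) unfolding poly2_deg_le_def by blast
  have M: "melnikov f1 g1 f2 g2 h =
     (\<Sum>i\<le>n. \<Sum>j\<le>n-i. cg1 i j * JJ i j h (arctan (uu h)) (- pi - arctan (uu h)) - cf1 i j * KK i j h (arctan (uu h)) (- pi - arctan (uu h)))
   + (\<Sum>i\<le>n. \<Sum>j\<le>n-i. cg2 i j * JJ i j h (pi - arctan (uu h)) (arctan (uu h)) - cf2 i j * KK i j h (pi - arctan (uu h)) (arctan (uu h)))" for h
    unfolding melnikov_def arcAD_def arcDA_def
    by (intro arg_cong2[where f="(+)"] arc_lin) (simp_all add: cg1 cf1 cg2 cf2)
  have "Rep n (melnikov f1 g1 f2 g2)"
    unfolding M
    by (intro Rep_add Rep_sum finite_atMost Rep_term) auto
  then show ?thesis unfolding Rep_def .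
qed


end
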